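(* For every real $\tau$ with $0\le\tau\le 1$, $$R(\tau)\ \ge\ \underline{R}(\tau):=(1+\tau)-(1+\tau)\log_2(1+\tau)+\tau\log_2\tau ,$$ with the convention $0\log_2 0=0$.
   Context: Binary Z-channel with noiseless feedback: an input symbol $0$ is always received as $0$; an input symbol $1$ is received either as $1$ or (an error) as $0$. A feedback encoding strategy of blocklength $n$ for a finite message set $\mathcal M$ is a collection of functions $c_i:\mathcal M\times\{0,1\}^{i-1}\to\{0,1\}$, $i=1,\dots,n$; when sending $m$, the $i$-th transmitted symbol is $c_i(m,y^{i-1})$, where $y^{i-1}=(y_1,\dots,y_{i-1})$ are the previously received symbols (known to the sender through feedback). Write $c(m,y^{n-1})=(c_1(m),c_2(m,y_1),\dots,c_n(m,y^{n-1}))$. For an integer $t\ge0$ let $\mathcal Y^n_t(m)=\{y^n\in\{0,1\}^n: y_i\le c_i(m,y^{i-1})\text{ for all }i,\ d_H(y^n,c(m,y^{n-1}))\le t\}$, where $d_H$ is the Hamming distance. The strategy is successful if $\mathcal Y^n_t(m_1)\cap\mathcal Y^n_t(m_2)=\emptyset$ for all distinct $m_1,m_2\in\mathcal M$. $M(n,t)$ is the maximum $|\mathcal M|$ for which a successful strategy of blocklength $n$ with at most $t$ errors exists. For $0\le\tau\le1$, $R(\tau):=\limsup_{n\to\infty}\frac{1}{n}\log_2 M(n,\lceil\tau n\rceil)$. All logarithms are base $2$. *)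

theory Defs
  imports "HOL-Analysis.Analysis"
begin

text \<open>Feedback encoding strategy of blocklength n for messages {0..<k}:
  enc i m ys is the (i+1)-th transmitted symbol (i = 0..n-1) when sending m,
  given the received prefix ys of length i. Symbols: False = 0, True = 1.\<close>

type_synonym strategy = "nat \<Rightarrow> nat \<Rightarrow> bool list \<Rightarrow> bool"

definition Yset :: "nat \<Rightarrow> nat \<Rightarrow> strategy \<Rightarrow> nat \<Rightarrow> bool list set" where
  "Yset n t enc m = {ys. length ys = n
      \<and> (\<forall>i<n. ys ! i \<le> enc i m (take i ys))
      \<and> card {i. i < n \<and> ys ! i \<noteq> enc i m (take i ys)} \<le> t}"

definition successful :: "nat \<Rightarrow> nat \<Rightarrow> nat \<Rightarrow> strategy \<Rightarrow> bool" where
  "successful n t k enc \<longleftrightarrow>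
     (\<forall>m1<k. \<forall>m2<k. m1 \<noteq> m2 \<longrightarrow> Yset n t enc m1 \<inter> Yset n t enc m2 = {})"

definition Mmax :: "nat \<Rightarrow> nat \<Rightarrow> nat" where
  "Mmax n t = Max {k. \<exists>enc. successful n t k enc}"

definition Rate :: "real \<Rightarrow> ereal" where
  "Rate \<tau> = limsup (\<lambda>n. ereal (log 2 (real (Mmax n (nat \<lceil>\<tau> * real n\<rceil>))) / real n))"

definition Rlow :: "real \<Rightarrow> real" where
  "Rlow \<tau> = (1 + \<tau>) - (1 + \<tau>) * log 2 (1 + \<tau>) + (if \<tau> = 0 then 0 else \<tau> * log 2 \<tau>)"

end

theory Submission
  imports Defs "HOL-Real_Asymp.Real_Asymp"
begin

definition combine :: "(nat \<Rightarrow> bool) \<Rightarrow> strategy \<Rightarrow> strategy \<Rightarrow> strategy" where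
  "combine x e1 e0 = (\<lambda>i m ys. if i = 0 then x m
     else if hd ys then e1 (i - 1) m (tl ys) else e0 (i - 1) m (tl ys))"

lemma Yset_Suc_dest:
  assumes "ys \<in> Yset (Suc q) r (combine x e1 e0) m"
  shows "\<exists>zs. (ys = True # zs \<and> x m \<and> zs \<in> Yset q r e1 m) \<or>
             (ys = False # zs \<and> (x m \<longrightarrow> 1 \<le> r) \<and> zs \<in> Yset q (if x m then r - 1 else r) e0 m)"
proof -
  let ?enc = "combine x e1 e0"
  from assms have len: "length ys = Suc q"
    and le: "\<forall>i<Suc q. ys ! i \<le> ?enc i m (take i ys)"
    and cE: "card {i. i < Suc q \<and> ys ! i \<noteq> ?enc i m (take i ys)} \<le> r"
    unfolding Yset_def by auto
  obtain y zs where ys: "ys = y # zs" using len by (cases ys) auto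
  have lz: "length zs = q" using len ys by simp
  define eY where "eY = (if y then e1 else e0)"
  have encS: "?enc (Suc k) m (take (Suc k) ys) = eY k m (take k zs)" for k
    by (simp add: combine_def ys eY_def)
  have enc0: "?enc 0 m (take 0 ys) = x m" by (simp add: combine_def)
  have y_le: "y \<le> x m" using le[rule_format, of 0] enc0 ys by simp
  have zle: "\<forall>k<q. zs ! k \<le> eY k m (take k zs)"
  proof (intro allI impI)
    fix k assume "k < q"
    then have "ys ! Suc k \<le> ?enc (Suc k) m (take (Suc k) ys)" using le by auto
    then show "zs ! k \<le> eY k m (take k zs)" using encS ys by simp
  qed
  define E where "E = {i. i < Suc q \<and> ys ! i \<noteq> ?enc i m (take i ys)}"
  define E' where "E' = {k. k < q \<and> zs ! k \<noteq> eY k m (take k zs)}"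
  have fE: "finite E" unfolding E_def by auto
  have sub: "Suc ` E' \<subseteq> E" unfolding E_def E'_def using encS ys by auto
  have cE': "card E' \<le> card E"
  proof -
    have "card (Suc ` E') = card E'" by (simp add: card_image)
    then show ?thesis using card_mono[OF fE sub] by simp
  qed
  have cE'': "y \<noteq> x m \<Longrightarrow> card E' + 1 \<le> card E"
  proof -
    assume ne: "y \<noteq> x m"
    have "0 \<in> E" unfolding E_def using ne ys enc0 by simp
    then have "insert 0 (Suc ` E') \<subseteq> E" using sub by auto
    moreover have "card (insert 0 (Suc ` E')) = card E' + 1"
    proof -
      have "finite E'" unfolding E'_def by auto
      then show ?thesis by (simp add: card_image)
    qed
    ultimately show ?thesis using card_mono[OF fE] by metis
  qed
  have cEr: "card E \<le> r" using cE unfolding E_def .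
  show ?thesis
  proof (cases y)
    case True
    then have xm: "x m" using y_le by simp
    have "zs \<in> Yset q r e1 m" unfolding Yset_def
      using lz zle cE' cEr True unfolding eY_def E'_def by auto
    then show ?thesis using ys True xm by auto
  next
    case False
    show ?thesis
    proof (cases "x m")
      case True
      have "card E' + 1 \<le> r" using cE'' cEr False True by fastforce
      then have "zs \<in> Yset q (r - 1) e0 m" unfolding Yset_def
        using lz zle False unfolding eY_def E'_def by auto
      then show ?thesis using ys False True \<open>card E' + 1 \<le> r\<close> by auto
    next
      case xF: False
      have "zs \<in> Yset q r e0 m" unfolding Yset_def
        using lz zle cE' cEr False unfolding eY_def E'_def by auto
      then show ?thesis using ys False xF by auto
    qed
  qed
qed


definition Inv :: "nat \<Rightarrow> nat \<Rightarrow> nat set \<Rightarrow> (nat \<Rightarrow> nat) \<Rightarrow> bool" where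
  "Inv q j A \<beta> \<longleftrightarrow> card A \<le> 1 \<or>
     (1 \<le> j \<and> (\<exists>M. (\<Sum>m\<in>A - {M}. (\<beta> m + j) choose j) \<le> q choose j))"

definition good :: "nat \<Rightarrow> nat set \<Rightarrow> (nat \<Rightarrow> nat) \<Rightarrow> strategy \<Rightarrow> bool" where
  "good q A \<beta> enc \<longleftrightarrow> (\<forall>m1\<in>A. \<forall>m2\<in>A. m1 \<noteq> m2 \<longrightarrow>
      Yset q (\<beta> m1) enc m1 \<inter> Yset q (\<beta> m2) enc m2 = {})"

lemma good_step:
  assumes g1: "good q S1 \<beta> enc1"
    and g0: "good q {m\<in>A. m \<notin> S1 \<or> 1 \<le> \<beta> m} (\<lambda>m. if m \<in> S1 then \<beta> m - 1 else \<beta> m) enc0"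
    and sub: "S1 \<subseteq> A"
  shows "good (Suc q) A \<beta> (combine (\<lambda>m. m \<in> S1) enc1 enc0)"
  unfolding good_def
proof (intro ballI impI)
  fix m1 m2 assume m1: "m1 \<in> A" and m2: "m2 \<in> A" and ne: "m1 \<noteq> m2"
  let ?x = "\<lambda>m. m \<in> S1"
  let ?enc = "combine ?x enc1 enc0"
  show "Yset (Suc q) (\<beta> m1) ?enc m1 \<inter> Yset (Suc q) (\<beta> m2) ?enc m2 = {}"
  proof (rule ccontr)
    assume "Yset (Suc q) (\<beta> m1) ?enc m1 \<inter> Yset (Suc q) (\<beta> m2) ?enc m2 \<noteq> {}"
    then obtain ys where y1: "ys \<in> Yset (Suc q) (\<beta> m1) ?enc m1"
      and y2: "ys \<in> Yset (Suc q) (\<beta> m2) ?enc m2" by blast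
    obtain zs1 where z1: "(ys = True # zs1 \<and> m1 \<in> S1 \<and> zs1 \<in> Yset q (\<beta> m1) enc1 m1) \<or>
             (ys = False # zs1 \<and> (m1 \<in> S1 \<longrightarrow> 1 \<le> \<beta> m1) \<and>
               zs1 \<in> Yset q (if m1 \<in> S1 then \<beta> m1 - 1 else \<beta> m1) enc0 m1)"
      using Yset_Suc_dest[OF y1] by blast
    obtain zs2 where z2: "(ys = True # zs2 \<and> m2 \<in> S1 \<and> zs2 \<in> Yset q (\<beta> m2) enc1 m2) \<or>
             (ys = False # zs2 \<and> (m2 \<in> S1 \<longrightarrow> 1 \<le> \<beta> m2) \<and>
               zs2 \<in> Yset q (if m2 \<in> S1 then \<beta> m2 - 1 else \<beta> m2) enc0 m2)"
      using Yset_Suc_dest[OF y2] by blast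
    show False
    proof (cases "hd ys")
      case True
      then have "ys = True # zs1 \<and> m1 \<in> S1 \<and> zs1 \<in> Yset q (\<beta> m1) enc1 m1"
        and "ys = True # zs2 \<and> m2 \<in> S1 \<and> zs2 \<in> Yset q (\<beta> m2) enc1 m2"
        using z1 z2 by auto
      then show False using g1 ne unfolding good_def by auto
    next
      case False
      then have a: "ys = False # zs1 \<and> (m1 \<in> S1 \<longrightarrow> 1 \<le> \<beta> m1) \<and>
               zs1 \<in> Yset q (if m1 \<in> S1 then \<beta> m1 - 1 else \<beta> m1) enc0 m1"
        and b: "ys = False # zs2 \<and> (m2 \<in> S1 \<longrightarrow> 1 \<le> \<beta> m2) \<and>
               zs2 \<in> Yset q (if m2 \<in> S1 then \<beta> m2 - 1 else \<beta> m2) enc0 m2"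
        using z1 z2 by auto
      have "m1 \<in> {m\<in>A. m \<notin> S1 \<or> 1 \<le> \<beta> m}" "m2 \<in> {m\<in>A. m \<notin> S1 \<or> 1 \<le> \<beta> m}"
        using a b m1 m2 by auto
      then show False using g0 ne a b unfolding good_def by auto
    qed
  qed
qed

lemma crossing:
  fixes a :: "nat \<Rightarrow> nat"
  assumes "finite B" "Q < sum a B"
  shows "\<exists>S\<subseteq>B. \<exists>x\<in>S. sum a (S - {x}) \<le> Q \<and> Q < sum a S"
  using assms
proof (induction B rule: finite_induct)
  case empty then show ?case by simp
next
  case (insert y B)
  show ?case
  proof (cases "Q < sum a B")
    case True
    then show ?thesis using insert.IH by blast
  next
    case False
    have "insert y B - {y} = B" using insert.hyps by auto
    then show ?thesis using False insert.prems
      by (intro exI[of _ "insert y B"]) auto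
  qed
qed

lemma ratio_elem:
  assumes "((r + Suc j') choose Suc j') \<le> Q choose Suc j'"
  shows "Q * ((r + j') choose Suc j') \<le> (Q - Suc j') * ((r + Suc j') choose Suc j')"
proof -
  let ?j = "Suc j'"
  let ?w = "(r + ?j) choose ?j" and ?b = "(r + j') choose ?j"
  have rQ: "r + ?j \<le> Q"
  proof (rule ccontr)
    assume "\<not> r + ?j \<le> Q"
    then have lt: "Q < r + ?j" by simp
    have "Q choose ?j < ?w"
    proof (cases "Q < ?j")
      case True
      then have "Q choose ?j = 0" by simp
      moreover have "0 < ?w" by (simp add: zero_less_binomial_iff)
      ultimately show ?thesis by linarith
    next
      case False
      have "Q choose ?j < Suc Q choose ?j"
        using False by (simp add: binomial_Suc_Suc)
      also have "\<dots> \<le> ?w" using lt by (intro binomial_right_mono) simp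
      finally show ?thesis .
    qed
    then show False using assms by simp
  qed
  have wsplit: "?w = ((r + j') choose j') + ?b"
    by (metis add_Suc_right binomial_Suc_Suc)
  have absorb: "r * ?w = (r + ?j) * ?b"
    using binomial_absorb_comp[of "r + ?j" ?j] by simp
  obtain d where d: "Q = r + ?j + d" using rQ le_iff_add by blast
  have bw: "?b \<le> ?w" using wsplit by simp
  have "Q * ?b = (r + ?j) * ?b + d * ?b" using d by (simp add: algebra_simps)
  also have "\<dots> = r * ?w + d * ?b" using absorb by simp
  also have "\<dots> \<le> r * ?w + d * ?w" using bw by simp
  also have "\<dots> = (Q - ?j) * ?w" using d by (simp add: algebra_simps)
  finally show ?thesis .
qed

lemma branch0_sum:
  fixes \<beta> :: "nat \<Rightarrow> nat"
  assumes fin: "finite A" and S: "S \<subseteq> A - {M}"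
  shows "(\<Sum>m\<in>{m\<in>A. m \<notin> S \<or> 1 \<le> \<beta> m} - {M}. ((if m \<in> S then \<beta> m - 1 else \<beta> m) + Suc j') choose Suc j')
         + (\<Sum>m\<in>S. (\<beta> m + j') choose j') \<le> (\<Sum>m\<in>A - {M}. (\<beta> m + Suc j') choose Suc j')"
proof -
  define g where "g m = (if m \<in> S then (\<beta> m + j') choose Suc j' else (\<beta> m + Suc j') choose Suc j')" for m
  let ?A0 = "{m\<in>A. m \<notin> S \<or> 1 \<le> \<beta> m} - {M}"
  have 1: "(\<Sum>m\<in>?A0. ((if m \<in> S then \<beta> m - 1 else \<beta> m) + Suc j') choose Suc j') = sum g ?A0"
  proof (rule sum.cong)
    fix m assume m: "m \<in> ?A0"
    show "((if m \<in> S then \<beta> m - 1 else \<beta> m) + Suc j') choose Suc j' = g m"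
    proof (cases "m \<in> S")
      case True
      then have e: "\<beta> m - 1 + Suc j' = \<beta> m + j'" using m by auto
      show ?thesis unfolding g_def if_P[OF True] e ..
    next
      case False
      show ?thesis unfolding g_def if_not_P[OF False] ..
    qed
  qed simp
  have 2: "sum g ?A0 \<le> sum g (A - {M})"
    by (rule sum_mono2) (use fin in auto)
  have 3: "(\<Sum>m\<in>S. (\<beta> m + j') choose j') = (\<Sum>m\<in>A - {M}. if m \<in> S then (\<beta> m + j') choose j' else 0)"
  proof -
    have "(\<Sum>m\<in>A - {M}. if m \<in> S then (\<beta> m + j') choose j' else 0)
       = (\<Sum>m\<in>(A - {M}) \<inter> S. (\<beta> m + j') choose j')"
      using sum.inter_restrict[of "A - {M}" "\<lambda>m. (\<beta> m + j') choose j'" S] fin by simp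
    moreover have "(A - {M}) \<inter> S = S" using S by auto
    ultimately show ?thesis by simp
  qed
  have 4: "sum g (A - {M}) + (\<Sum>m\<in>A - {M}. if m \<in> S then (\<beta> m + j') choose j' else 0)
        = (\<Sum>m\<in>A - {M}. (\<beta> m + Suc j') choose Suc j')"
    unfolding sum.distrib[symmetric]
    by (rule sum.cong) (auto simp: g_def binomial_Suc_Suc)
  show ?thesis using 1 2 3 4 by linarith
qed

lemma split_exists:
  fixes \<beta> :: "nat \<Rightarrow> nat"
  assumes fin: "finite A" and c2: "\<not> card A \<le> 1"
    and M: "(\<Sum>m\<in>A - {M}. (\<beta> m + Suc j') choose Suc j') \<le> Suc q choose Suc j'"
  shows "\<exists>S1\<subseteq>A. Inv q j' S1 \<beta> \<and>
           Inv q (Suc j') {m\<in>A. m \<notin> S1 \<or> 1 \<le> \<beta> m} (\<lambda>m. if m \<in> S1 then \<beta> m - 1 else \<beta> m)"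
proof -
  let ?w = "\<lambda>m. (\<beta> m + Suc j') choose Suc j'"
  let ?a = "\<lambda>m. (\<beta> m + j') choose j'"
  have AM: "A - {M} \<noteq> {}"
  proof
    assume "A - {M} = {}"
    then have "A \<subseteq> {M}" by auto
    then have "card A \<le> 1" using card_mono[of "{M}" A] by auto
    then show False using c2 by simp
  qed
  show ?thesis
  proof (cases "j' = 0")
    case True
    obtain x where x: "x \<in> A - {M}" using AM by blast
    have bs: "(\<Sum>m\<in>{m\<in>A. m \<notin> {x} \<or> 1 \<le> \<beta> m} - {M}. ((if m \<in> {x} then \<beta> m - 1 else \<beta> m) + Suc j') choose Suc j')
         + (\<Sum>m\<in>{x}. (\<beta> m + j') choose j') \<le> (\<Sum>m\<in>A - {M}. ?w m)"
      by (rule branch0_sum) (use fin x in auto)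
    have "(\<Sum>m\<in>{x}. (\<beta> m + j') choose j') = 1" using True by simp
    then have "(\<Sum>m\<in>{m\<in>A. m \<notin> {x} \<or> 1 \<le> \<beta> m} - {M}. ((if m \<in> {x} then \<beta> m - 1 else \<beta> m) + Suc j') choose Suc j')
        \<le> q choose Suc j'" using bs M True by simp
    then have "Inv q (Suc j') {m\<in>A. m \<notin> {x} \<or> 1 \<le> \<beta> m} (\<lambda>m. if m \<in> {x} then \<beta> m - 1 else \<beta> m)"
      unfolding Inv_def by (intro disjI2 conjI exI[of _ M]) auto
    moreover have "Inv q j' {x} \<beta>" unfolding Inv_def by simp
    ultimately show ?thesis using x by (intro exI[of _ "{x}"]) auto
  next
    case j'pos: False
    show ?thesis
    proof (cases "(\<Sum>m\<in>A - {M}. ?a m) \<le> q choose j'")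
      case True
      have I1: "Inv q j' A \<beta>" unfolding Inv_def using True j'pos by auto
      let ?A0 = "{m\<in>A. m \<notin> A \<or> 1 \<le> \<beta> m}"
      have s1: "(\<Sum>m\<in>?A0 - {M}. ((if m \<in> A then \<beta> m - 1 else \<beta> m) + Suc j') choose Suc j')
            \<le> (\<Sum>m\<in>A - {M}. (\<beta> m + j') choose Suc j')"
      proof -
        have "(\<Sum>m\<in>?A0 - {M}. ((if m \<in> A then \<beta> m - 1 else \<beta> m) + Suc j') choose Suc j')
            = (\<Sum>m\<in>?A0 - {M}. (\<beta> m + j') choose Suc j')"
        proof (rule sum.cong)
          fix m assume m: "m \<in> ?A0 - {M}"
          then have e: "\<beta> m - 1 + Suc j' = \<beta> m + j'" by auto
          have mA: "m \<in> A" using m by auto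
          show "((if m \<in> A then \<beta> m - 1 else \<beta> m) + Suc j') choose Suc j' = (\<beta> m + j') choose Suc j'"
            unfolding if_P[OF mA] e ..
        qed simp
        also have "\<dots> \<le> (\<Sum>m\<in>A - {M}. (\<beta> m + j') choose Suc j')"
          by (rule sum_mono2) (use fin in auto)
        finally show ?thesis .
      qed
      have s2: "Suc q * (\<Sum>m\<in>A - {M}. (\<beta> m + j') choose Suc j')
             \<le> (Suc q - Suc j') * (\<Sum>m\<in>A - {M}. ?w m)"
      proof -
        have "Suc q * (\<Sum>m\<in>A - {M}. (\<beta> m + j') choose Suc j')
            = (\<Sum>m\<in>A - {M}. Suc q * ((\<beta> m + j') choose Suc j'))"
          by (simp add: sum_distrib_left)
        also have "\<dots> \<le> (\<Sum>m\<in>A - {M}. (Suc q - Suc j') * ?w m)"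
        proof (rule sum_mono)
          fix m assume m: "m \<in> A - {M}"
          have "?w m \<le> (\<Sum>m\<in>A - {M}. ?w m)"
            by (rule member_le_sum) (use m fin in auto)
          then have "?w m \<le> Suc q choose Suc j'" using M by linarith
          then show "Suc q * ((\<beta> m + j') choose Suc j') \<le> (Suc q - Suc j') * ?w m"
            by (rule ratio_elem)
        qed
        also have "\<dots> = (Suc q - Suc j') * (\<Sum>m\<in>A - {M}. ?w m)"
          by (simp add: sum_distrib_left)
        finally show ?thesis .
      qed
      have s3: "(Suc q - Suc j') * (\<Sum>m\<in>A - {M}. ?w m) \<le> Suc q * (q choose Suc j')"
      proof -
        have "(Suc q - Suc j') * (\<Sum>m\<in>A - {M}. ?w m) \<le> (Suc q - Suc j') * (Suc q choose Suc j')"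
          using M by (rule mult_le_mono2)
        also have "\<dots> = Suc q * (q choose Suc j')"
          using binomial_absorb_comp[of "Suc q" "Suc j'"] by (simp only: diff_Suc_1)
        finally show ?thesis .
      qed
      have "(\<Sum>m\<in>A - {M}. (\<beta> m + j') choose Suc j') \<le> q choose Suc j'"
      proof -
        have "Suc q * (\<Sum>m\<in>A - {M}. (\<beta> m + j') choose Suc j') \<le> Suc q * (q choose Suc j')"
          using s2 s3 by (rule le_trans)
        then show ?thesis by (simp only: mult_le_cancel1)
      qed
      then have I0: "Inv q (Suc j') ?A0 (\<lambda>m. if m \<in> A then \<beta> m - 1 else \<beta> m)"
        unfolding Inv_def using s1 by (intro disjI2 conjI exI[of _ M]) auto
      show ?thesis using I1 I0 by (intro exI[of _ A]) auto
    next
      case False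
      then have lt: "q choose j' < (\<Sum>m\<in>A - {M}. ?a m)" by simp
      obtain S x where S: "S \<subseteq> A - {M}" and x: "x \<in> S"
        and Sx: "(\<Sum>m\<in>S - {x}. ?a m) \<le> q choose j'" and Sa: "q choose j' < (\<Sum>m\<in>S. ?a m)"
        using crossing[OF _ lt] fin by blast
      have I1: "Inv q j' S \<beta>" unfolding Inv_def using Sx j'pos by auto
      have bs: "(\<Sum>m\<in>{m\<in>A. m \<notin> S \<or> 1 \<le> \<beta> m} - {M}. ((if m \<in> S then \<beta> m - 1 else \<beta> m) + Suc j') choose Suc j')
         + (\<Sum>m\<in>S. (\<beta> m + j') choose j') \<le> (\<Sum>m\<in>A - {M}. ?w m)"
        by (rule branch0_sum) (use fin S in auto)
      have "Suc q choose Suc j' = (q choose j') + (q choose Suc j')" by simp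
      then have "(\<Sum>m\<in>{m\<in>A. m \<notin> S \<or> 1 \<le> \<beta> m} - {M}. ((if m \<in> S then \<beta> m - 1 else \<beta> m) + Suc j') choose Suc j')
          \<le> q choose Suc j'" using bs M Sa by linarith
      then have I0: "Inv q (Suc j') {m\<in>A. m \<notin> S \<or> 1 \<le> \<beta> m} (\<lambda>m. if m \<in> S then \<beta> m - 1 else \<beta> m)"
        unfolding Inv_def by (intro disjI2 conjI exI[of _ M]) auto
      show ?thesis using I1 I0 S by (intro exI[of _ S]) auto
    qed
  qed
qed

lemma main_game:
  "finite A \<Longrightarrow> Inv q j A \<beta> \<Longrightarrow> \<exists>enc. good q A \<beta> enc"
proof (induction q arbitrary: j A \<beta>)
  case 0
  show ?case
  proof (cases "card A \<le> 1")
    case True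
    have "good 0 A \<beta> (\<lambda>i m ys. False)" unfolding good_def
    proof (intro ballI impI)
      fix m1 m2 assume "m1 \<in> A" "m2 \<in> A" "m1 \<noteq> m2"
      then have "{m1, m2} \<subseteq> A" by auto
      then have "card {m1, m2} \<le> card A" using card_mono 0(1) by blast
      then show "Yset 0 (\<beta> m1) (\<lambda>i m ys. False) m1 \<inter> Yset 0 (\<beta> m2) (\<lambda>i m ys. False) m2 = {}"
        using True \<open>m1 \<noteq> m2\<close> by simp
    qed
    then show ?thesis by blast
  next
    case False
    then obtain M where j: "1 \<le> j" and M: "(\<Sum>m\<in>A - {M}. (\<beta> m + j) choose j) \<le> 0 choose j"
      using 0(2) unfolding Inv_def by blast
    have "A - {M} \<noteq> {}"
    proof
      assume "A - {M} = {}"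
      then have "A \<subseteq> {M}" by auto
      then have "card A \<le> 1" using card_mono[of "{M}" A] by auto
      then show False using False by simp
    qed
    then obtain y where y: "y \<in> A - {M}" by blast
    have "(\<beta> y + j) choose j \<le> (\<Sum>m\<in>A - {M}. (\<beta> m + j) choose j)"
      by (rule member_le_sum) (use y 0(1) in auto)
    moreover have "0 < (\<beta> y + j) choose j" by (simp add: zero_less_binomial_iff)
    moreover have "0 choose j = 0" using j by (cases j) auto
    ultimately show ?thesis using M by linarith
  qed
next
  case (Suc q)
  show ?case
  proof (cases "card A \<le> 1")
    case True
    have "good (Suc q) A \<beta> (\<lambda>i m ys. False)" unfolding good_def
    proof (intro ballI impI)
      fix m1 m2 assume "m1 \<in> A" "m2 \<in> A" "m1 \<noteq> m2"
      then have "{m1, m2} \<subseteq> A" by auto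
      then have "card {m1, m2} \<le> card A" using card_mono Suc(2) by blast
      then show "Yset (Suc q) (\<beta> m1) (\<lambda>i m ys. False) m1 \<inter> Yset (Suc q) (\<beta> m2) (\<lambda>i m ys. False) m2 = {}"
        using True \<open>m1 \<noteq> m2\<close> by simp
    qed
    then show ?thesis by blast
  next
    case False
    then obtain M where j: "1 \<le> j" and M: "(\<Sum>m\<in>A - {M}. (\<beta> m + j) choose j) \<le> Suc q choose j"
      using Suc(3) unfolding Inv_def by blast
    obtain j' where j': "j = Suc j'" using j by (cases j) auto
    obtain S1 where S1: "S1 \<subseteq> A" and I1: "Inv q j' S1 \<beta>"
      and I0: "Inv q (Suc j') {m\<in>A. m \<notin> S1 \<or> 1 \<le> \<beta> m} (\<lambda>m. if m \<in> S1 then \<beta> m - 1 else \<beta> m)"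
      using split_exists[OF Suc(2) False, of \<beta> j' M q] M j' by blast
    obtain enc1 where e1: "good q S1 \<beta> enc1"
      using Suc.IH[OF _ I1] S1 Suc(2) finite_subset by blast
    obtain enc0 where e0: "good q {m\<in>A. m \<notin> S1 \<or> 1 \<le> \<beta> m} (\<lambda>m. if m \<in> S1 then \<beta> m - 1 else \<beta> m) enc0"
      using Suc.IH[OF _ I0] Suc(2) by auto
    show ?thesis using good_step[OF e1 e0 S1] by blast
  qed
qed

fun efp :: "strategy \<Rightarrow> nat \<Rightarrow> nat \<Rightarrow> bool list" where
  "efp enc m 0 = []"
| "efp enc m (Suc i) = efp enc m i @ [enc i m (efp enc m i)]"

lemma efp_length [simp]: "length (efp enc m i) = i"
  by (induction i) auto

lemma efp_take: "k \<le> i \<Longrightarrow> take k (efp enc m i) = efp enc m k"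
proof (induction i)
  case 0 then show ?case by simp
next
  case (Suc i)
  show ?case
  proof (cases "k = Suc i")
    case True then show ?thesis by simp
  next
    case False
    then have "k \<le> i" using Suc.prems by simp
    then show ?thesis using Suc.IH by simp
  qed
qed

lemma efp_nth: "k < i \<Longrightarrow> efp enc m i ! k = enc k m (efp enc m k)"
proof -
  assume k: "k < i"
  have "efp enc m i ! k = take (Suc k) (efp enc m i) ! k" by simp
  also have "\<dots> = efp enc m (Suc k) ! k" using k efp_take[of "Suc k" i enc m] by simp
  also have "\<dots> = enc k m (efp enc m k)" by (simp add: nth_append)
  finally show ?thesis .
qed

lemma efp_in: "efp enc m n \<in> Yset n t enc m"
proof -
  have e: "\<forall>i<n. efp enc m n ! i = enc i m (take i (efp enc m n))"
    using efp_nth efp_take by simp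
  then have E: "{i. i < n \<and> efp enc m n ! i \<noteq> enc i m (take i (efp enc m n))} = {}" by auto
  show ?thesis unfolding Yset_def mem_Collect_eq E using e by simp
qed

lemma successful_bound:
  assumes "successful n t k enc"
  shows "k \<le> 2 ^ n"
proof -
  let ?f = "\<lambda>m. efp enc m n"
  have inj: "inj_on ?f {..<k}"
  proof (rule inj_onI)
    fix m1 m2 assume m: "m1 \<in> {..<k}" "m2 \<in> {..<k}" and eq: "?f m1 = ?f m2"
    show "m1 = m2"
    proof (rule ccontr)
      assume ne: "m1 \<noteq> m2"
      have "?f m1 \<in> Yset n t enc m1 \<inter> Yset n t enc m2" using efp_in[of enc m1 n t] efp_in[of enc m2 n t] eq by simp
      then show False using assms m ne unfolding successful_def by auto
    qed
  qed
  have sub: "?f ` {..<k} \<subseteq> {xs. set xs \<subseteq> (UNIV :: bool set) \<and> length xs = n}" by auto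
  have "card {..<k} \<le> card {xs. set xs \<subseteq> (UNIV :: bool set) \<and> length xs = n}"
    by (rule card_inj_on_le[OF inj sub]) (use finite_lists_length_eq[of "UNIV::bool set" n] in simp)
  also have "\<dots> = 2 ^ n" using card_lists_length_eq[of "UNIV::bool set" n] by simp
  finally show ?thesis by simp
qed

lemma Yset_mono: "t \<le> s \<Longrightarrow> Yset n t enc m \<subseteq> Yset n s enc m"
  unfolding Yset_def by auto

lemma Mmax_lower:
  assumes j: "1 \<le> j" and ts: "t \<le> s" and K: "(K - 1) * ((s + j) choose j) \<le> n choose j"
  shows "K \<le> Mmax n t"
proof -
  have I: "Inv n j {0..<K} (\<lambda>_. s)"
  proof (cases "K \<le> 1")
    case True then show ?thesis unfolding Inv_def by simp
  next
    case False
    have "(\<Sum>m\<in>{0..<K} - {0}. (s + j) choose j) = (K - 1) * ((s + j) choose j)"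
      using False by simp
    then show ?thesis unfolding Inv_def using j K by (intro disjI2 conjI exI[of _ 0]) auto
  qed
  obtain enc where g: "good n {0..<K} (\<lambda>_. s) enc" using main_game[OF _ I] by blast
  have succ: "successful n t K enc" unfolding successful_def
  proof (intro allI impI)
    fix m1 m2 assume "m1 < K" "m2 < K" "m1 \<noteq> m2"
    then have "Yset n s enc m1 \<inter> Yset n s enc m2 = {}" using g unfolding good_def by auto
    then show "Yset n t enc m1 \<inter> Yset n t enc m2 = {}" using Yset_mono[OF ts] by blast
  qed
  have fin: "finite {k. \<exists>enc. successful n t k enc}"
    by (rule finite_subset[of _ "{..2 ^ n}"]) (auto dest: successful_bound)
  show ?thesis unfolding Mmax_def using succ fin by (intro Max_ge) auto
qed

lemma binom_identity:
  assumes n: "n = s + 2 * j"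
  shows "((n + s) choose s) * (n choose j) = ((n + s) choose (s + j)) * ((s + j) choose j)"
proof -
  let ?N = "n + s" and ?a = "s + j"
  have h1: "(?N choose n) * (n choose j) = (?N choose j) * ((?N - j) choose (n - j))"
    by (rule choose_mult) (use n in auto)
  have h2: "(?N choose ?a) * (?a choose j) = (?N choose j) * ((?N - j) choose (?a - j))"
    by (rule choose_mult) (use n in auto)
  have e1: "?N choose s = ?N choose n"
    using binomial_symmetric[of s ?N] by simp
  have e2: "(?N - j) choose (n - j) = (?N - j) choose (?a - j)"
    using binomial_symmetric[of "?a - j" "?N - j"] n by (simp add: ac_simps)
  show ?thesis using h1 h2 e1 e2 by simp
qed

lemma central_lower: "2 ^ N \<le> (N + 1) * (N choose (N div 2))"
proof -
  have "2 ^ N = (\<Sum>k\<le>N. N choose k)" by (simp add: choose_row_sum)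
  also have "\<dots> \<le> (\<Sum>k\<le>N. N choose (N div 2))"
    by (rule sum_mono) (rule binomial_maximum)
  also have "\<dots> = (N + 1) * (N choose (N div 2))" by simp
  finally show ?thesis .
qed

lemma entropy_upper:
  assumes "s \<le> N"
  shows "(N choose s) * s ^ s * (N - s) ^ (N - s) \<le> N ^ N"
proof -
  have "N ^ N = (s + (N - s)) ^ N" using assms by simp
  also have "\<dots> = (\<Sum>k\<le>N. (N choose k) * s ^ k * (N - s) ^ (N - k))"
    by (simp add: binomial_ring)
  finally have eq: "N ^ N = (\<Sum>k\<le>N. (N choose k) * s ^ k * (N - s) ^ (N - k))" .
  have "(N choose s) * s ^ s * (N - s) ^ (N - s) \<le> (\<Sum>k\<le>N. (N choose k) * s ^ k * (N - s) ^ (N - k))"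
    by (rule member_le_sum[where f = "\<lambda>k. (N choose k) * s ^ k * (N - s) ^ (N - k)"]) (use assms in auto)
  then show ?thesis using eq by simp
qed

lemma Mmax_real_bound:
  assumes j: "1 \<le> j" and ts: "t \<le> s" and n: "n = s + 2 * j"
  shows "2 ^ (n + s) * real s ^ s * real n ^ n / ((real (n + s) + 1) * real (n + s) ^ (n + s))
           \<le> real (Mmax n t)"
proof -
  define N where "N = n + s"
  define a where "a = s + j"
  define d where "d = a choose j"
  define C where "C = n choose j"
  define K where "K = C div d + 1"
  have dpos: "0 < d" unfolding d_def a_def by (simp add: zero_less_binomial_iff)
  have KM: "K \<le> Mmax n t"
  proof (rule Mmax_lower[OF j ts])
    show "(K - 1) * ((s + j) choose j) \<le> n choose j"
      unfolding K_def using div_times_less_eq_dividend[of C d] by (simp add: C_def d_def a_def)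
  qed
  have CK: "C < K * d"
  proof -
    have e: "C div d * d + C mod d = C" by (rule div_mult_mod_eq)
    have m: "C mod d < d" using dpos by simp
    have k: "K * d = C div d * d + d" unfolding K_def by (simp only: add_mult_distrib mult_1)
    show ?thesis using e m k by linarith
  qed
  have r1: "real C / real d \<le> real K"
  proof -
    have "real C < real K * real d" using CK by (metis of_nat_less_iff of_nat_mult)
    then show ?thesis using dpos by (simp add: divide_le_eq less_imp_le)
  qed
  have Na: "N = 2 * a" unfolding N_def a_def using n by simp
  have Ns: "N - s = n" unfolding N_def by simp
  have sN: "s \<le> N" unfolding N_def by simp
  have id: "(N choose s) * C = (N choose a) * d"
    unfolding N_def C_def d_def a_def using binom_identity[OF n] by simp
  have Nspos: "0 < N choose s" using sN by (simp add: zero_less_binomial_iff)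
  have r2: "real C / real d = real (N choose a) / real (N choose s)"
  proof -
    have "real (N choose s) * real C = real (N choose a) * real d"
      using id by (metis of_nat_mult)
    then show ?thesis using dpos Nspos by (simp add: field_simps)
  qed
  have c1: "2 ^ N \<le> (real N + 1) * real (N choose a)"
  proof -
    have h: "2 ^ N \<le> (N + 1) * (N choose a)" using central_lower[of N] Na by simp
    have "real (2 ^ N) \<le> real ((N + 1) * (N choose a))" by (rule of_nat_mono[OF h])
    then show ?thesis by (simp add: algebra_simps)
  qed
  have c2: "real (N choose s) * (real s ^ s * real n ^ n) \<le> real N ^ N"
  proof -
    have "(N choose s) * s ^ s * (N - s) ^ (N - s) \<le> N ^ N" by (rule entropy_upper[OF sN])
    then have "real ((N choose s) * s ^ s * n ^ n) \<le> real (N ^ N)" using Ns by (simp only: of_nat_le_iff)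
    then show ?thesis by (simp add: mult.assoc)
  qed
  have Npos: "0 < real N" unfolding N_def n using j by simp
  have f1: "2 ^ N / (real N + 1) \<le> real (N choose a)"
    using c1 Npos by (simp add: divide_le_eq mult.commute)
  have f2: "real s ^ s * real n ^ n / real N ^ N \<le> 1 / real (N choose s)"
    using c2 Nspos Npos by (simp add: divide_le_eq le_divide_eq mult.commute)
  have "2 ^ N * real s ^ s * real n ^ n / ((real N + 1) * real N ^ N)
      = (2 ^ N / (real N + 1)) * (real s ^ s * real n ^ n / real N ^ N)"
    by (simp add: field_simps)
  also have "\<dots> \<le> real (N choose a) * (1 / real (N choose s))"
    by (rule mult_mono[OF f1 f2]) auto
  also have "\<dots> = real C / real d" using r2 by simp
  also have "\<dots> \<le> real K" by (rule r1)
  also have "\<dots> \<le> real (Mmax n t)" using KM by simp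
  finally show ?thesis unfolding N_def by simp
qed

lemma log_pow_nat: "log 2 (real s ^ s) = real s * log 2 (real s)"
  by (simp add: log_nat_power)

lemma Rlow_scaled:
  assumes n: "0 < n"
  shows "real n * Rlow (real s / real n)
     = real (n + s) - real (n + s) * log 2 (real (n + s)) + real n * log 2 (real n) + real s * log 2 (real s)"
proof -
  have np: "0 < real n" using n by simp
  have e1: "real n * (1 + real s / real n) = real (n + s)" using np by (simp add: field_simps)
  have e2: "log 2 (1 + real s / real n) = log 2 (real (n + s)) - log 2 (real n)"
  proof -
    have "1 + real s / real n = real (n + s) / real n" using np by (simp add: field_simps)
    then show ?thesis using np by (simp add: log_divide)
  qed
  have e3: "real n * (if real s / real n = 0 then 0 else real s / real n * log 2 (real s / real n))
       = real s * log 2 (real s) - real s * log 2 (real n)"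
  proof (cases "s = 0")
    case True then show ?thesis by simp
  next
    case False
    then have sp: "0 < real s" by simp
    have "real s / real n \<noteq> 0" using sp np by simp
    moreover have L: "log 2 (real s / real n) = log 2 (real s) - log 2 (real n)"
      using sp np by (simp add: log_divide)
    moreover have "real n * (real s / real n * log 2 (real s / real n)) = real s * log 2 (real s / real n)"
      using np by simp
    ultimately show ?thesis by (simp only: if_False L right_diff_distrib)
  qed
  have "real n * Rlow (real s / real n) = real n * (1 + real s / real n)
      - real n * (1 + real s / real n) * log 2 (1 + real s / real n)
      + real n * (if real s / real n = 0 then 0 else real s / real n * log 2 (real s / real n))"
    unfolding Rlow_def by (simp add: algebra_simps)
  also have "\<dots> = real (n + s) - real (n + s) * (log 2 (real (n + s)) - log 2 (real n))
      + (real s * log 2 (real s) - real s * log 2 (real n))"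
    unfolding e1 e2 e3 ..
  also have "\<dots> = real (n + s) - real (n + s) * log 2 (real (n + s)) + real n * log 2 (real n) + real s * log 2 (real s)"
    by (simp add: algebra_simps)
  finally show ?thesis .
qed

lemma log_bound:
  assumes j: "1 \<le> j" and ts: "t \<le> s" and n: "n = s + 2 * j"
  shows "Rlow (real s / real n) - log 2 (real (n + s) + 1) / real n \<le> log 2 (real (Mmax n t)) / real n"
proof -
  define N where "N = n + s"
  have npos: "0 < n" using n j by simp
  have np: "0 < real n" using npos by simp
  have Np: "0 < real N" unfolding N_def using npos by simp
  have sp: "0 < real s ^ s"
    by (cases "s = 0") auto
  have nnp: "0 < real n ^ n" using np by simp
  have NNp: "0 < real N ^ N" using Np by simp
  define B where "B = 2 ^ N * real s ^ s * real n ^ n / ((real N + 1) * real N ^ N)"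
  have Bp: "0 < B" unfolding B_def using sp nnp NNp Np by (intro divide_pos_pos mult_pos_pos) auto
  have BM: "B \<le> real (Mmax n t)" unfolding B_def N_def using Mmax_real_bound[OF j ts n] by simp
  have lB: "log 2 B \<le> log 2 (real (Mmax n t))"
    using Bp BM by simp
  have logB: "log 2 B = real N + real s * log 2 (real s) + real n * log 2 (real n)
                 - log 2 (real N + 1) - real N * log 2 (real N)"
  proof -
    have "log 2 B = log 2 (2 ^ N * real s ^ s * real n ^ n) - log 2 ((real N + 1) * real N ^ N)"
      unfolding B_def using sp nnp NNp Np by (subst log_divide) auto
    also have "log 2 (2 ^ N * real s ^ s * real n ^ n) = log 2 (2 ^ N) + log 2 (real s ^ s) + log 2 (real n ^ n)"
      using sp nnp by (simp add: log_mult)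
    also have "log 2 ((real N + 1) * real N ^ N) = log 2 (real N + 1) + log 2 (real N ^ N)"
      using NNp Np by (simp add: log_mult)
    finally show ?thesis using log_pow_nat[of s] log_pow_nat[of n] log_pow_nat[of N]
      by (simp add: log_nat_power)
  qed
  have "real n * Rlow (real s / real n) - log 2 (real N + 1) = log 2 B"
    using Rlow_scaled[OF npos, of s] logB unfolding N_def by simp
  then have "real n * Rlow (real s / real n) - log 2 (real N + 1) \<le> log 2 (real (Mmax n t))"
    using lB by simp
  then have "(real n * Rlow (real s / real n) - log 2 (real N + 1)) / real n \<le> log 2 (real (Mmax n t)) / real n"
    using np by (simp add: divide_right_mono)
  then show ?thesis using np unfolding N_def by (simp add: diff_divide_distrib)
qed

definition Rf :: "real \<Rightarrow> real" where
  "Rf x = (1 + x) - (1 + x) * log 2 (1 + x) + x * log 2 x"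

lemma Rlow_cont:
  assumes "0 \<le> \<tau>"
  shows "continuous (at \<tau> within {0..}) Rlow"
proof (cases "\<tau> = 0")
  case True
  have lim: "(Rf \<longlongrightarrow> 1) (at_right 0)" unfolding Rf_def by real_asymp
  have ev: "\<forall>\<^sub>F x in at_right 0. Rf x = Rlow x"
    using eventually_at_right_less[of "0::real"]
    by eventually_elim (auto simp: Rf_def Rlow_def)
  have "(Rlow \<longlongrightarrow> 1) (at_right 0)" using tendsto_cong[OF ev] lim by simp
  moreover have "Rlow 0 = 1" unfolding Rlow_def by simp
  ultimately show ?thesis unfolding True continuous_within at_within_Ici_at_right by simp
next
  case False
  then have tp: "0 < \<tau>" using assms by simp
  have ev: "\<forall>\<^sub>F x in at \<tau> within {0..}. Rf x = Rlow x"
    using order_tendstoD(1)[OF tendsto_ident_at tp]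
    by eventually_elim (auto simp: Rf_def Rlow_def)
  have "(Rf \<longlongrightarrow> Rf \<tau>) (at \<tau> within {0..})"
    unfolding Rf_def using tp by (intro tendsto_intros) auto
  moreover have "Rf \<tau> = Rlow \<tau>" using tp by (simp add: Rf_def Rlow_def)
  ultimately have "(Rlow \<longlongrightarrow> Rlow \<tau>) (at \<tau> within {0..})"
    using tendsto_cong[OF ev] by simp
  then show ?thesis unfolding continuous_within .
qed

theorem theorem1:
  fixes \<tau> :: real
  assumes "0 \<le> \<tau>" and "\<tau> \<le> 1"
  shows "Rate \<tau> \<ge> ereal (Rlow \<tau>)"
proof (cases "\<tau> = 1")
  case True
  have R1: "Rlow \<tau> = 0" using True unfolding Rlow_def by simp
  have "\<forall>\<^sub>F n in sequentially. ereal 0 \<le> ereal (log 2 (real (Mmax n (nat \<lceil>\<tau> * real n\<rceil>))) / real n)"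
  proof (rule always_eventually, rule allI)
    fix n
    have "1 \<le> Mmax n (nat \<lceil>\<tau> * real n\<rceil>)"
      by (rule Mmax_lower[of 1 "nat \<lceil>\<tau> * real n\<rceil>" "nat \<lceil>\<tau> * real n\<rceil>"]) auto
    then have "0 \<le> log 2 (real (Mmax n (nat \<lceil>\<tau> * real n\<rceil>)))" by simp
    then show "ereal 0 \<le> ereal (log 2 (real (Mmax n (nat \<lceil>\<tau> * real n\<rceil>))) / real n)" by simp
  qed
  then have "Limsup sequentially (\<lambda>n. ereal 0) \<le> Rate \<tau>"
    unfolding Rate_def by (rule Limsup_mono)
  then show ?thesis using R1 by (simp add: Limsup_const)
next
  case False
  then have t1: "\<tau> < 1" using assms by simp
  define t where "t n = nat \<lceil>\<tau> * real n\<rceil>" for n :: nat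
  define s where "s n = (if even (n - t n) then t n else Suc (t n))" for n
  define L where "L n = Rlow (real (s n) / real n) - log 2 (real (n + s n) + 1) / real n" for n
  have t_ge: "\<tau> * real n \<le> real (t n)" for n unfolding t_def by (rule real_nat_ceiling_ge)
  have t_le: "real (t n) < \<tau> * real n + 1" for n
  proof -
    have "0 \<le> \<tau> * real n" using assms by simp
    then have "real (t n) = real_of_int \<lceil>\<tau> * real n\<rceil>" unfolding t_def by simp
    also have "\<dots> < \<tau> * real n + 1" by linarith
    finally show ?thesis .
  qed
  have t_len: "t n \<le> n" for n
  proof -
    have "\<tau> * real n \<le> real n" using assms by (metis mult_left_le_one_le of_nat_0_le_iff)
    then have "real (t n) < real n + 1" using t_le[of n] by linarith
    then show ?thesis by simp
  qed
  have s_ge: "t n \<le> s n" for n unfolding s_def by simp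
  have s_le: "s n \<le> Suc (t n)" for n unfolding s_def by simp
  define N0 where "N0 = nat \<lceil>4 / (1 - \<tau>)\<rceil>"
  have ev: "\<forall>\<^sub>F n in sequentially. ereal (L n) \<le> ereal (log 2 (real (Mmax n (nat \<lceil>\<tau> * real n\<rceil>))) / real n)"
    using eventually_ge_at_top[of N0]
  proof eventually_elim
    case (elim n)
    have "4 / (1 - \<tau>) \<le> real n" using elim unfolding N0_def by linarith
    then have "4 \<le> real n * (1 - \<tau>)" using t1 by (simp add: divide_le_eq)
    then have "\<tau> * real n + 4 \<le> real n" by (simp add: algebra_simps)
    then have "real (s n) + 2 \<le> real n" using t_le[of n] s_le[of n] by simp
    then have sn: "s n + 2 \<le> n" by linarith
    have evn: "even (n - s n)"
    proof (cases "even (n - t n)")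
      case True then show ?thesis unfolding s_def by simp
    next
      case False
      then have "n - s n = (n - t n) - 1" unfolding s_def by simp
      moreover have "odd (n - t n)" using False by simp
      moreover have "0 < n - t n" using False by (cases "n - t n") auto
      ultimately show ?thesis by simp
    qed
    define j where "j = (n - s n) div 2"
    have nj: "n = s n + 2 * j" unfolding j_def using evn sn by simp
    have j1: "1 \<le> j" unfolding j_def using sn by simp
    have "L n \<le> log 2 (real (Mmax n (t n))) / real n"
      unfolding L_def by (rule log_bound[OF j1 s_ge nj])
    then show ?case unfolding t_def by simp
  qed
  have x_lim: "(\<lambda>n. real (s n) / real n) \<longlonglongrightarrow> \<tau>"
  proof (rule tendsto_sandwich[of "\<lambda>n. \<tau>" _ _ "\<lambda>n. \<tau> + 2 / real n"])
    show "\<forall>\<^sub>F n in sequentially. \<tau> \<le> real (s n) / real n"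
      using eventually_gt_at_top[of 0]
    proof eventually_elim
      case (elim n)
      then have "\<tau> * real n \<le> real (s n)" using t_ge[of n] s_ge[of n] by linarith
      then show ?case using elim by (simp add: le_divide_eq)
    qed
    show "\<forall>\<^sub>F n in sequentially. real (s n) / real n \<le> \<tau> + 2 / real n"
      using eventually_gt_at_top[of 0]
    proof eventually_elim
      case (elim n)
      have "real (s n) \<le> \<tau> * real n + 2" using t_le[of n] s_le[of n] by simp
      then have "real (s n) / real n \<le> (\<tau> * real n + 2) / real n"
        using elim by (simp add: divide_right_mono)
      also have "\<dots> = \<tau> + 2 / real n" using elim by (simp add: field_simps)
      finally show ?case .
    qed
    show "(\<lambda>n. \<tau>) \<longlonglongrightarrow> \<tau>" by simp
    show "(\<lambda>n. \<tau> + 2 / real n) \<longlonglongrightarrow> \<tau>" by real_asymp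
  qed
  have R_lim: "(\<lambda>n. Rlow (real (s n) / real n)) \<longlonglongrightarrow> Rlow \<tau>"
    by (rule continuous_within_tendsto_compose[OF Rlow_cont[OF assms(1)] _ x_lim]) auto
  have log_lim: "(\<lambda>n. log 2 (real (n + s n) + 1) / real n) \<longlonglongrightarrow> 0"
  proof (rule tendsto_sandwich[of "\<lambda>n. 0" _ _ "\<lambda>n. log 2 (2 * real n + 3) / real n"])
    show "\<forall>\<^sub>F n in sequentially. 0 \<le> log 2 (real (n + s n) + 1) / real n"
      by (rule always_eventually) simp
    show "\<forall>\<^sub>F n in sequentially. log 2 (real (n + s n) + 1) / real n \<le> log 2 (2 * real n + 3) / real n"
    proof (rule always_eventually, rule allI)
      fix n
      have "s n \<le> Suc n" using s_le[of n] t_len[of n] by simp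
      then have "real (n + s n) + 1 \<le> 2 * real n + 3" by simp
      then have "log 2 (real (n + s n) + 1) \<le> log 2 (2 * real n + 3)" by simp
      then show "log 2 (real (n + s n) + 1) / real n \<le> log 2 (2 * real n + 3) / real n"
        by (simp add: divide_right_mono)
    qed
    show "(\<lambda>n. 0) \<longlonglongrightarrow> (0::real)" by simp
    show "(\<lambda>n. log 2 (2 * real n + 3) / real n) \<longlonglongrightarrow> 0" by real_asymp
  qed
  have "L \<longlonglongrightarrow> Rlow \<tau> - 0" unfolding L_def by (intro tendsto_diff R_lim log_lim)
  then have "(\<lambda>n. ereal (L n)) \<longlonglongrightarrow> ereal (Rlow \<tau>)" by (intro tendsto_ereal) simp
  then have "Limsup sequentially (\<lambda>n. ereal (L n)) = ereal (Rlow \<tau>)"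
    by (intro lim_imp_Limsup) simp_all
  moreover have "Limsup sequentially (\<lambda>n. ereal (L n)) \<le> Rate \<tau>"
    unfolding Rate_def by (rule Limsup_mono[OF ev])
  ultimately show ?thesis by simp
qed

end
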